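(* In any monoid admitting a $C(2)$ presentation, the set of non-identity indecomposable elements is a generating set for the monoid, and it is contained in every generating set for the monoid.
   Context: A monoid presentation $\langle \mathscr{A} \mid \mathscr{R} \rangle$ consists of an alphabet $\mathscr{A}$ and a set $\mathscr{R} \subseteq \mathscr{A}^* \times \mathscr{A}^*$ of relations; the monoid presented is the quotient of the free monoid $\mathscr{A}^*$ by the smallest congruence containing $\mathscr{R}$. A relation word is a word occurring as one side of a relation. A piece is a word which occurs as a factor of two distinct relation words, or in two different (possibly overlapping) positions within one relation word; the empty word is always a piece. The presentation is $C(2)$ if no relation word can be written as a product of strictly fewer than $2$ pieces (i.e. no relation word is empty or is itself a piece). A non-identity element $s$ of a monoid is indecomposable if whenever $xy = s$ we have $x = 1$ or $y = 1$. *)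

theory Defs
  imports Main
begin

definition relation_words :: "('b list \<times> 'b list) set \<Rightarrow> 'b list set" where
  "relation_words R = {w. \<exists>v. (w, v) \<in> R \<or> (v, w) \<in> R}"

definition occurs_at :: "'b list \<Rightarrow> 'b list \<Rightarrow> nat \<Rightarrow> bool" where
  "occurs_at p w i \<longleftrightarrow> i + length p \<le> length w \<and> take (length p) (drop i w) = p"

text \<open>A piece: factor of two distinct relation words, or occurring in two different
  positions in one relation word; the empty word is always a piece.\<close>
definition is_piece :: "('b list \<times> 'b list) set \<Rightarrow> 'b list \<Rightarrow> bool" where
  "is_piece R p \<longleftrightarrow> p = [] \<or>
     (\<exists>w1 i1 w2 i2. w1 \<in> relation_words R \<and> w2 \<in> relation_words R \<and>
        occurs_at p w1 i1 \<and> occurs_at p w2 i2 \<and> (w1, i1) \<noteq> (w2, i2))"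

definition small_cancellation_C :: "nat \<Rightarrow> ('b list \<times> 'b list) set \<Rightarrow> bool" where
  "small_cancellation_C n R \<longleftrightarrow>
     (\<forall>w \<in> relation_words R. \<not> (\<exists>ps. length ps < n \<and> (\<forall>p \<in> set ps. is_piece R p) \<and> concat ps = w))"

definition presentation_congruence :: "'b set \<Rightarrow> ('b list \<times> 'b list) set \<Rightarrow> ('b list \<times> 'b list) set" where
  "presentation_congruence A R = \<Inter> {E. E \<subseteq> lists A \<times> lists A \<and> equiv (lists A) E \<and> R \<subseteq> E \<and>
      (\<forall>(u, v) \<in> E. \<forall>x \<in> lists A. \<forall>y \<in> lists A. (x @ u @ y, x @ v @ y) \<in> E)}"

text \<open>\<open>\<langle>A | R\<rangle>\<close> is a presentation of the monoid (type) \<open>'a\<close> via the generator map \<open>f\<close>: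
  the induced monoid homomorphism \<open>A\<^sup>* \<rightarrow> 'a\<close> is surjective and its kernel is exactly the
  congruence generated by \<open>R\<close>, i.e. it induces an isomorphism \<open>A\<^sup>*/\<sim>\<^sub>R \<cong> 'a\<close>.\<close>
definition is_presentation :: "'b set \<Rightarrow> ('b list \<times> 'b list) set \<Rightarrow> ('b \<Rightarrow> 'a::monoid_mult) \<Rightarrow> bool" where
  "is_presentation A R f \<longleftrightarrow>
     R \<subseteq> lists A \<times> lists A \<and>
     (\<forall>m::'a. \<exists>w \<in> lists A. prod_list (map f w) = m) \<and>
     (\<forall>u \<in> lists A. \<forall>v \<in> lists A.
        prod_list (map f u) = prod_list (map f v) \<longleftrightarrow> (u, v) \<in> presentation_congruence A R)"

definition indecomposable :: "'a::monoid_mult \<Rightarrow> bool" where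
  "indecomposable s \<longleftrightarrow> s \<noteq> 1 \<and> (\<forall>x y. x * y = s \<longrightarrow> x = 1 \<or> y = 1)"

definition generating_set :: "'a::monoid_mult set \<Rightarrow> bool" where
  "generating_set S \<longleftrightarrow> (\<forall>m. \<exists>xs. set xs \<subseteq> S \<and> prod_list xs = m)"

end

theory Submission
  imports Defs
begin

lemma cong_inv:
  assumes "(u,v) \<in> presentation_congruence A R"
    and RA: "R \<subseteq> lists A \<times> lists A"
    and inv: "\<And>r r' x y. (r,r') \<in> R \<Longrightarrow> P(x@r@y) = P(x@r'@y)"
  shows "P u = P v"
proof -
  let ?E = "{(u,v). u \<in> lists A \<and> v \<in> lists A \<and> (\<forall>x y. P(x@u@y) = P(x@v@y))}"
  have eq: "equiv (lists A) ?E"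
    unfolding equiv_def refl_on_def sym_def trans_def by auto
  have RE: "R \<subseteq> ?E" using RA inv by auto
  have cl0: "(x @ u @ y, x @ v @ y) \<in> ?E" if h: "(u,v) \<in> ?E" "x \<in> lists A" "y \<in> lists A" for u v x y
  proof -
    have "\<forall>x' y'. P(x'@(x@u@y)@y') = P(x'@(x@v@y)@y')"
    proof (intro allI)
      fix x' y'
      have "\<forall>x y. P(x@u@y) = P(x@v@y)" using h(1) by blast
      hence "P((x'@x)@u@(y@y')) = P((x'@x)@v@(y@y'))" by blast
      thus "P(x'@(x@u@y)@y') = P(x'@(x@v@y)@y')" by simp
    qed
    thus ?thesis using h by auto
  qed
  have cl: "\<forall>(u, v) \<in> ?E. \<forall>x \<in> lists A. \<forall>y \<in> lists A. (x @ u @ y, x @ v @ y) \<in> ?E"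
    using cl0 by blast
  have "?E \<subseteq> lists A \<times> lists A" by auto
  hence "presentation_congruence A R \<subseteq> ?E"
    unfolding presentation_congruence_def using eq RE cl by (intro Inter_lower) blast
  with assms(1) have "\<forall>x y. P(x@u@y) = P(x@v@y)" by auto
  from this[rule_format, of "[]" "[]"] show ?thesis by simp
qed

lemma rw_not_piece:
  assumes "small_cancellation_C 2 R" "r \<in> relation_words R"
  shows "\<not> is_piece R r"
proof
  assume "is_piece R r"
  with assms show False unfolding small_cancellation_C_def
    by (auto dest!: bspec[of _ _ r] spec[of _ "[r]"])
qed

lemma rw_nonempty:
  assumes "small_cancellation_C 2 R" "r \<in> relation_words R"
  shows "r \<noteq> []"
  using rw_not_piece[OF assms] unfolding is_piece_def by auto

lemma occ_unique:
  assumes "small_cancellation_C 2 R" "r \<in> relation_words R" "w \<in> relation_words R"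
    "occurs_at r w i"
  shows "w = r \<and> i = 0"
proof (rule ccontr)
  assume "\<not> (w = r \<and> i = 0)"
  moreover have "occurs_at r r 0" by (simp add: occurs_at_def)
  ultimately have "is_piece R r" using assms unfolding is_piece_def by blast
  with rw_not_piece[OF assms(1,2)] show False by simp
qed

lemma occ_mid: "occurs_at r (x@r@y) (length x)"
  by (simp add: occurs_at_def)

lemma occ_nth: "i < length w \<Longrightarrow> occurs_at [w ! i] w i"
  unfolding occurs_at_def by (simp add: take_Suc_conv_app_nth)

lemma R_rw: "(r,r') \<in> R \<Longrightarrow> r \<in> relation_words R \<and> r' \<in> relation_words R"
  unfolding relation_words_def by auto

lemma inv_rw:
  assumes C: "small_cancellation_C 2 R" and "(r,r') \<in> R" "x@r@y \<in> relation_words R"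
  shows "x@r'@y \<in> relation_words R"
proof -
  have r: "r \<in> relation_words R" "r' \<in> relation_words R" using R_rw[OF assms(2)] by auto
  have "x@r@y = r \<and> length x = 0" using occ_unique[OF C r(1) assms(3) occ_mid] .
  hence "x = []" "y = []" by auto
  thus ?thesis using r by simp
qed

lemma inv_single:
  assumes C: "small_cancellation_C 2 R" and "(r,r') \<in> R" "[b] \<notin> relation_words R"
    "x@r@y = [b]"
  shows False
proof -
  have r: "r \<in> relation_words R" using R_rw[OF assms(2)] by auto
  have "r \<noteq> []" using rw_nonempty[OF C r] .
  with assms(4) have "r = [b]"
    by (cases x; cases r; auto)
  with r assms(3) show False by simp
qed

lemma inv_empty:
  assumes C: "small_cancellation_C 2 R" and "(r,r') \<in> R" "x@r@y = []"
  shows False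
  using rw_nonempty[OF C] R_rw[OF assms(2)] assms(3) by auto

context
  fixes A :: "'b set" and R :: "('b list \<times> 'b list) set" and f :: "'b \<Rightarrow> 'a::monoid_mult"
  assumes P: "is_presentation A R f"
    and C: "small_cancellation_C 2 R"
begin

lemma RA: "R \<subseteq> lists A \<times> lists A" using P unfolding is_presentation_def by auto

lemma surj: "\<exists>w \<in> lists A. prod_list (map f w) = m" using P unfolding is_presentation_def by auto

lemma ker: "u \<in> lists A \<Longrightarrow> v \<in> lists A \<Longrightarrow>
   prod_list (map f u) = prod_list (map f v) \<Longrightarrow> (u, v) \<in> presentation_congruence A R"
  using P unfolding is_presentation_def by auto

lemma nonempty_ne1:
  assumes "u \<in> lists A" "u \<noteq> []" shows "prod_list (map f u) \<noteq> 1"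
proof
  assume "prod_list (map f u) = 1"
  hence "(u, []) \<in> presentation_congruence A R" using ker[of u "[]"] assms by simp
  hence "(u = []) = ([] = ([]::'b list))"
  proof (rule cong_inv[OF _ RA])
    fix r r' x y assume rr: "(r, r') \<in> R"
    have "r \<noteq> []" "r' \<noteq> []" using R_rw[OF rr] rw_nonempty[OF C] by auto
    thus "(x @ r @ y = []) = (x @ r' @ y = [])" by simp
  qed
  with assms show False by simp
qed

lemma single_indec:
  assumes a: "a \<in> A" and nr: "[a] \<notin> relation_words R"
  shows "indecomposable (f a)"
proof -
  have cls: "w = [a]" if "w \<in> lists A" "([a], w) \<in> presentation_congruence A R" for w
  proof -
    have "([a] = [a]) = (w = [a])"
    proof (rule cong_inv[OF that(2) RA])
      fix r r' x y assume rr: "(r, r') \<in> R"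
      have "x @ r @ y \<noteq> [a]" using inv_single[OF C rr nr] by blast
      moreover have "x @ r' @ y \<noteq> [a]"
      proof
        assume h: "x @ r' @ y = [a]"
        have r': "r' \<in> relation_words R" using R_rw[OF rr] by auto
        have "r' \<noteq> []" using rw_nonempty[OF C r'] .
        with h have "r' = [a]" by (cases x; cases r'; auto)
        with r' nr show False by simp
      qed
      ultimately show "(x @ r @ y = [a]) = (x @ r' @ y = [a])" by simp
    qed
    thus ?thesis by simp
  qed
  have "f a \<noteq> 1" using nonempty_ne1[of "[a]"] a by simp
  moreover have "x = 1 \<or> y = 1" if "x * y = f a" for x y
  proof -
    obtain u where u: "u \<in> lists A" "prod_list (map f u) = x" using surj by blast
    obtain v where v: "v \<in> lists A" "prod_list (map f v) = y" using surj by blast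
    have "prod_list (map f [a]) = prod_list (map f (u@v))" using u v that by simp
    hence "([a], u@v) \<in> presentation_congruence A R" using ker[of "[a]" "u@v"] a u v by simp
    hence "u@v = [a]" using cls u v by simp
    hence "u = [] \<or> v = []" by (cases u) auto
    thus ?thesis using u v by auto
  qed
  ultimately show ?thesis unfolding indecomposable_def by blast
qed

lemma letter_gen:
  assumes a: "a \<in> A"
  shows "\<exists>xs. set xs \<subseteq> {s. indecomposable s} \<and> prod_list xs = f a"
proof (cases "[a] \<in> relation_words R")
  case False
  thus ?thesis using single_indec[OF a] by (intro exI[of _ "[f a]"]) auto
next
  case rw: True
  show ?thesis
  proof (cases "indecomposable (f a)")
    case True
    thus ?thesis by (intro exI[of _ "[f a]"]) auto
  next
    case False
    have "f a \<noteq> 1" using nonempty_ne1[of "[a]"] a by simp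
    with False obtain x y where xy: "x * y = f a" "x \<noteq> 1" "y \<noteq> 1"
      unfolding indecomposable_def by blast
    obtain u where u: "u \<in> lists A" "prod_list (map f u) = x" using surj by blast
    obtain v where v: "v \<in> lists A" "prod_list (map f v) = y" using surj by blast
    have une: "u \<noteq> []" "v \<noteq> []" using u v xy by auto
    have "prod_list (map f [a]) = prod_list (map f (u@v))" using u v xy by simp
    hence "([a], u@v) \<in> presentation_congruence A R" using ker[of "[a]" "u@v"] a u v by simp
    hence "([a] \<in> relation_words R) = (u@v \<in> relation_words R)"
    proof (rule cong_inv[OF _ RA])
      fix r r' x y assume rr: "(r, r') \<in> R"
      have "x@r@y \<in> relation_words R \<Longrightarrow> x@r'@y \<in> relation_words R" using inv_rw[OF C rr] .
      moreover have "x@r'@y \<in> relation_words R \<Longrightarrow> x@r@y \<in> relation_words R"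
      proof -
        assume h: "x@r'@y \<in> relation_words R"
        have r: "r \<in> relation_words R" "r' \<in> relation_words R" using R_rw[OF rr] by auto
        have "x@r'@y = r' \<and> length x = 0" using occ_unique[OF C r(2) h occ_mid] .
        hence "x = []" "y = []" by auto
        thus ?thesis using r by simp
      qed
      ultimately show "(x@r@y \<in> relation_words R) = (x@r'@y \<in> relation_words R)" by blast
    qed
    with rw have uvrw: "u@v \<in> relation_words R" by simp
    have "indecomposable (f b)" if b: "b \<in> set (u@v)" for b
    proof -
      have bA: "b \<in> A" using b u v by auto
      have "[b] \<notin> relation_words R"
      proof
        assume brw: "[b] \<in> relation_words R"
        obtain i where "i < length (u@v)" "(u@v) ! i = b" using b by (metis in_set_conv_nth)
        hence "occurs_at [b] (u@v) i"
          using occ_nth[of i "u@v"] by simp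
        from occ_unique[OF C brw uvrw this] have "u@v = [b]" by simp
        with une show False by (cases u) auto
      qed
      thus ?thesis using single_indec[OF bA] by simp
    qed
    moreover have "prod_list (map f (u@v)) = f a" using u v xy by simp
    ultimately show ?thesis by (intro exI[of _ "map f (u@v)"]) auto
  qed
qed

lemma word_gen:
  "w \<in> lists A \<Longrightarrow> \<exists>xs. set xs \<subseteq> {s. indecomposable s} \<and> prod_list xs = prod_list (map f w)"
proof (induction w)
  case Nil
  thus ?case by (intro exI[of _ "[]"]) auto
next
  case (Cons b w)
  obtain xs where xs: "set xs \<subseteq> {s. indecomposable s}" "prod_list xs = f b"
    using letter_gen[of b] Cons.prems by auto
  obtain ys where ys: "set ys \<subseteq> {s. indecomposable s}" "prod_list ys = prod_list (map f w)"
    using Cons by auto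
  show ?case using xs ys by (intro exI[of _ "xs @ ys"]) auto
qed

end

lemma indec_in_gen:
  fixes S :: "'a::monoid_mult set"
  shows "set xs \<subseteq> S \<Longrightarrow> prod_list xs = s \<Longrightarrow> indecomposable s \<Longrightarrow> s \<in> S"
proof (induction xs arbitrary: s)
  case Nil thus ?case by (simp add: indecomposable_def)
next
  case (Cons x xs)
  have "x * prod_list xs = s" using Cons by simp
  hence "x = 1 \<or> prod_list xs = 1" using Cons.prems(3) unfolding indecomposable_def by blast
  thus ?case
  proof
    assume "x = 1" thus ?thesis using Cons by simp
  next
    assume "prod_list xs = 1" thus ?thesis using Cons by auto
  qed
qed

theorem corollary1:
  fixes A :: "'b set" and R :: "('b list \<times> 'b list) set" and f :: "'b \<Rightarrow> 'a::monoid_mult"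
  assumes "is_presentation A R f"
    and "small_cancellation_C 2 R"
  shows "generating_set {s::'a. indecomposable s} \<and>
         (\<forall>S. generating_set S \<longrightarrow> {s::'a. indecomposable s} \<subseteq> S)"
proof
  show "generating_set {s::'a. indecomposable s}"
    unfolding generating_set_def
  proof
    fix m :: 'a
    obtain w where "w \<in> lists A" "prod_list (map f w) = m" using surj[OF assms] by blast
    thus "\<exists>xs. set xs \<subseteq> {s. indecomposable s} \<and> prod_list xs = m"
      using word_gen[OF assms] by metis
  qed
  show "\<forall>S. generating_set S \<longrightarrow> {s::'a. indecomposable s} \<subseteq> S"
    unfolding generating_set_def using indec_in_gen by blast
qed

end
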